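(* Let $h\in\widehat{\operatorname{IET}^{\bowtie}}$. Then there exist $f,g\in\widehat{\operatorname{IET}^{+}_{\mathrm{rc}}}$, finite products of flips $r,s$, and finitely supported permutations $\sigma,\tau$ of $[0,1[$ such that $h=r\sigma f=g\tau s$.
   Context: $X=[0,1[$. $\widehat{\operatorname{IET}^{\bowtie}}$ is the group of bijections $f:X\to X$ for which there is a finite partition of $X$ into intervals $[a,b[$ such that on each open interval $]a,b[$, $f$ is of the form $x\mapsto x+c$ or $x\mapsto -x+c$. $\widehat{\operatorname{IET}^{+}}$ is the subgroup of those for which only the form $x\mapsto x+c$ occurs, and $\widehat{\operatorname{IET}^{+}_{\mathrm{rc}}}$ is the subgroup of right-continuous elements of $\widehat{\operatorname{IET}^{+}}$. For a nonempty interval $I=[a,b[\subseteq X$, the $I$-flip is the bijection of $X$ which maps $x\mapsto a+b-x$ on $]a,b[$ and fixes every other point of $X$ (including $a$); a flip is an $I$-flip for some such $I$. *)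

theory Defs
  imports "HOL-Analysis.Analysis"
begin

definition X :: "real set" where
  "X = {0..<1}"

definition perm_X :: "(real \<Rightarrow> real) \<Rightarrow> bool" where
  "perm_X f \<longleftrightarrow> bij_betw f X X \<and> (\<forall>x. x \<notin> X \<longrightarrow> f x = x)"

definition pw_isom :: "bool \<Rightarrow> (real \<Rightarrow> real) \<Rightarrow> bool" where
  "pw_isom allow_flip f \<longleftrightarrow>
     (\<exists>(n::nat) (t::nat \<Rightarrow> real). t 0 = 0 \<and> t n = 1 \<and> (\<forall>i<n. t i < t (Suc i)) \<and>
        (\<forall>i<n. \<exists>c. (\<forall>x. t i < x \<and> x < t (Suc i) \<longrightarrow> f x = x + c) \<or>
                   (allow_flip \<and> (\<forall>x. t i < x \<and> x < t (Suc i) \<longrightarrow> f x = - x + c))))"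

definition IET_hat_flip :: "(real \<Rightarrow> real) \<Rightarrow> bool" where
  "IET_hat_flip f \<longleftrightarrow> perm_X f \<and> pw_isom True f"

definition IET_hat_plus :: "(real \<Rightarrow> real) \<Rightarrow> bool" where
  "IET_hat_plus f \<longleftrightarrow> perm_X f \<and> pw_isom False f"

definition IET_hat_plus_rc :: "(real \<Rightarrow> real) \<Rightarrow> bool" where
  "IET_hat_plus_rc f \<longleftrightarrow> IET_hat_plus f \<and> (\<forall>x\<in>X. continuous (at_right x) f)"

definition flip :: "real \<Rightarrow> real \<Rightarrow> real \<Rightarrow> real" where
  "flip a b x = (if a < x \<and> x < b then a + b - x else x)"

inductive flip_product :: "(real \<Rightarrow> real) \<Rightarrow> bool" where
  fp_id: "flip_product id"
| fp_step: "flip_product r \<Longrightarrow> 0 \<le> a \<Longrightarrow> a < b \<Longrightarrow> b \<le> 1 \<Longrightarrow> flip_product (flip a b \<circ> r)"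

definition fin_supp_perm_X :: "(real \<Rightarrow> real) \<Rightarrow> bool" where
  "fin_supp_perm_X s \<longleftrightarrow> bij_betw s X X \<and> {x. s x \<noteq> x} \<subseteq> X \<and> finite {x. s x \<noteq> x}"

end

theory Submission
  imports Defs
begin

section \<open>Flip products\<close>

lemma flip_product_comp:
  assumes "flip_product p" "flip_product q" shows "flip_product (p \<circ> q)"
  using assms
proof (induction p rule: flip_product.induct)
  case fp_id then show ?case by simp
next
  case (fp_step r a b)
  have "flip_product (r \<circ> q)" using fp_step by blast
  then have "flip_product (flip a b \<circ> (r \<circ> q))"
    using flip_product.fp_step[of "r \<circ> q" a b] fp_step.hyps by blast
  then show ?case by (simp only: comp_assoc)
qed

lemma flip_flip: "flip a b (flip a b x) = x"
  unfolding flip_def by auto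

lemma flip_comp_flip: "flip a b \<circ> flip a b = id"
  by (rule ext) (simp add: flip_flip)

lemma flip_product_single: "0 \<le> a \<Longrightarrow> a < b \<Longrightarrow> b \<le> 1 \<Longrightarrow> flip_product (flip a b)"
  using flip_product.fp_step[OF flip_product.fp_id, of a b] by (simp only: comp_id)

lemma flip_product_inverse:
  assumes "flip_product r0"
  shows "\<exists>r. flip_product r \<and> r \<circ> r0 = id \<and> r0 \<circ> r = id"
  using assms
proof (induction r0 rule: flip_product.induct)
  case fp_id
  have "flip_product id \<and> id \<circ> id = id \<and> id \<circ> id = id" using flip_product.fp_id by simp
  then show ?case by blast
next
  case (fp_step r a b)
  then obtain r' where r': "flip_product r'" "r' \<circ> r = id" "r \<circ> r' = id" by blast
  have "flip_product (r' \<circ> flip a b)"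
    using flip_product_comp[OF r'(1) flip_product_single] fp_step by auto
  moreover have "(r' \<circ> flip a b) \<circ> (flip a b \<circ> r) = id"
    using r' flip_comp_flip[of a b] by (simp add: comp_assoc[symmetric]) (simp add: comp_assoc)
  moreover have "(flip a b \<circ> r) \<circ> (r' \<circ> flip a b) = id"
    using r' flip_comp_flip[of a b] by (simp add: comp_assoc[symmetric]) (simp add: comp_assoc)
  ultimately show ?case by blast
qed

lemma flip_bij:
  assumes "0 \<le> a" "b \<le> 1"
  shows "bij_betw (flip a b) X X"
proof -
  have m: "flip a b ` X \<subseteq> X" using assms unfolding flip_def X_def by auto
  show ?thesis
    by (rule bij_betw_byWitness[where f'="flip a b"]) (use m flip_flip in auto)
qed

lemma flip_product_perm:
  assumes "flip_product r"
  shows "bij_betw r X X \<and> (\<forall>x. x \<notin> X \<longrightarrow> r x = x)"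
  using assms
proof (induction r rule: flip_product.induct)
  case fp_id then show ?case by (simp add: bij_betw_def)
next
  case (fp_step r a b)
  have "bij_betw (flip a b \<circ> r) X X"
    using bij_betw_trans[of r X X "flip a b" X] fp_step flip_bij by auto
  moreover have "\<forall>x. x \<notin> X \<longrightarrow> flip a b x = x"
    using fp_step unfolding flip_def X_def by auto
  ultimately show ?case using fp_step by (metis comp_apply)
qed

definition FP :: "nat list \<Rightarrow> (nat \<Rightarrow> real) \<Rightarrow> (nat \<Rightarrow> real) \<Rightarrow> real \<Rightarrow> real" where
  "FP L p q = foldr (\<lambda>j acc. flip (p j) (q j) \<circ> acc) L id"

lemma FP_Nil[simp]: "FP [] p q = id" by (simp add: FP_def)
lemma FP_Cons[simp]: "FP (j # L) p q = flip (p j) (q j) \<circ> FP L p q" by (simp add: FP_def)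

lemma FP_fix:
  "(\<forall>j\<in>set L. z \<notin> {p j<..<q j}) \<Longrightarrow> FP L p q z = z"
  by (induction L) (auto simp: flip_def)

lemma FP_flip:
  assumes "distinct L" "i \<in> set L" "z \<in> {p i<..<q i}"
    "\<forall>j\<in>set L. j \<noteq> i \<longrightarrow> {p j<..<q j} \<inter> {p i<..<q i} = {}"
  shows "FP L p q z = p i + q i - z"
  using assms
proof (induction L)
  case Nil then show ?case by simp
next
  case (Cons j L)
  show ?case
  proof (cases "j = i")
    case True
    then have "FP L p q z = z" using Cons.prems by (intro FP_fix) auto
    then show ?thesis using True Cons.prems by (simp add: flip_def)
  next
    case False
    then have "FP L p q z = p i + q i - z" using Cons by auto
    moreover have "p i + q i - z \<in> {p i<..<q i}" using Cons.prems by auto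
    then have "p i + q i - z \<notin> {p j<..<q j}" using Cons.prems False by auto
    ultimately show ?thesis unfolding FP_Cons comp_def flip_def by auto
  qed
qed

lemma FP_flip_product:
  "(\<forall>j\<in>set L. 0 \<le> p j \<and> p j < q j \<and> q j \<le> 1) \<Longrightarrow> flip_product (FP L p q)"
  by (induction L) (auto intro: flip_product.intros)

lemma upper_lim:
  fixes p q c :: real
  assumes "p < q" "\<forall>y. p < y \<and> y < q \<longrightarrow> y \<le> c" shows "q \<le> c"
proof (rule ccontr)
  assume "\<not> q \<le> c"
  define y where "y = max ((p+q)/2) ((c+q)/2)"
  have "p < y \<and> y < q" using assms \<open>\<not> q \<le> c\<close> unfolding y_def by (auto simp: max_def min_def)
  moreover have "c < y" using \<open>\<not> q \<le> c\<close> unfolding y_def by (auto simp: max_def min_def)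
  ultimately show False using assms by force
qed

lemma lower_lim:
  fixes p q c :: real
  assumes "p < q" "\<forall>y. p < y \<and> y < q \<longrightarrow> c \<le> y" shows "c \<le> p"
proof (rule ccontr)
  assume "\<not> c \<le> p"
  define y where "y = min ((p+q)/2) ((c+p)/2)"
  have "p < y \<and> y < q" using assms \<open>\<not> c \<le> p\<close> unfolding y_def by (auto simp: max_def min_def)
  moreover have "y < c" using \<open>\<not> c \<le> p\<close> unfolding y_def by (auto simp: max_def min_def)
  ultimately show False using assms by force
qed

lemma eventually_ex_frequently:
  assumes "eventually (\<lambda>x. \<exists>i\<in>S. P i x) F" "finite S" "F \<noteq> bot"
  shows "\<exists>i\<in>S. frequently (P i) F"
proof (rule ccontr)
  assume "\<not> ?thesis"
  then have "\<forall>i\<in>S. eventually (\<lambda>x. \<not> P i x) F" by (simp add: not_frequently)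
  then have "eventually (\<lambda>x. \<forall>i\<in>S. \<not> P i x) F" using assms(2) by (simp add: eventually_ball_finite)
  with assms(1) have "eventually (\<lambda>x. False) F" by (auto elim: eventually_elim2)
  then show False using assms(3) by (simp add: eventually_False)
qed


section \<open>The decomposition\<close>

locale dec =
  fixes h :: "real \<Rightarrow> real" and n :: nat and t :: "nat \<Rightarrow> real"
    and c :: "nat \<Rightarrow> real" and fl :: "nat \<Rightarrow> bool"
  assumes perm: "perm_X h" and t0: "t 0 = 0" and tn: "t n = 1"
    and tmono: "\<forall>i<n. t i < t (Suc i)"
    and piece: "\<And>i x. i < n \<Longrightarrow> t i < x \<Longrightarrow> x < t (Suc i) \<Longrightarrow>
        h x = (if fl i then - x + c i else x + c i)"
begin

definition I where "I i = {t i<..<t (Suc i)}"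
definition d where "d i = (if fl i then c i - t i - t (Suc i) else c i)"
definition pre where "pre i y = (if fl i then t i + t (Suc i) - y else y)"
definition J where "J i = {t i + d i<..<t (Suc i) + d i}"

lemma t_less: "i < j \<Longrightarrow> j \<le> n \<Longrightarrow> t i < t j"
proof (induction j)
  case 0 then show ?case by simp
next
  case (Suc j)
  have tj: "t j < t (Suc j)" using tmono Suc.prems by auto
  show ?case
  proof (cases "i = j")
    case True then show ?thesis using tj by simp
  next
    case False
    then have "t i < t j" using Suc by auto
    then show ?thesis using tj by linarith
  qed
qed

lemma t_le: "i \<le> j \<Longrightarrow> j \<le> n \<Longrightarrow> t i \<le> t j"
proof (cases "i = j")
  case True then show ?thesis by simp
next
  case False
  assume "i \<le> j" "j \<le> n"
  with False have "i < j" by simp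
  then show ?thesis using t_less \<open>j \<le> n\<close> less_imp_le by blast
qed

lemma t_bounds: "i \<le> n \<Longrightarrow> 0 \<le> t i \<and> t i \<le> 1"
  using t_le[of 0 i] t_le[of i n] t0 tn by auto

lemma I_X: "i < n \<Longrightarrow> x \<in> I i \<Longrightarrow> x \<in> X"
  using t_bounds[of i] t_bounds[of "Suc i"] unfolding I_def X_def by auto

lemma I_disj: "i < n \<Longrightarrow> j < n \<Longrightarrow> i \<noteq> j \<Longrightarrow> x \<in> I i \<Longrightarrow> x \<in> I j \<Longrightarrow> False"
proof -
  assume a: "i < n" "j < n" "i \<noteq> j" "x \<in> I i" "x \<in> I j"
  show False
  proof (cases "i < j")
    case True
    then have "t (Suc i) \<le> t j" using t_le[of "Suc i" j] a by auto
    then show False using a unfolding I_def by auto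
  next
    case False
    then have "t (Suc j) \<le> t i" using t_le[of "Suc j" i] a by auto
    then show False using a unfolding I_def by auto
  qed
qed

lemma piece_ex: "x \<in> X \<Longrightarrow> \<exists>i<n. t i \<le> x \<and> x < t (Suc i)"
proof -
  assume x: "x \<in> X"
  define S where "S = {i. i \<le> n \<and> t i \<le> x}"
  have fin: "finite S" unfolding S_def by auto
  have "0 \<in> S" using x t0 unfolding S_def X_def by auto
  define i where "i = Max S"
  have iS: "i \<in> S" using fin \<open>0 \<in> S\<close> unfolding i_def by (auto intro: Max_in)
  have "i \<noteq> n" using iS x tn unfolding S_def X_def by auto
  then have "i < n" using iS unfolding S_def by auto
  have "Suc i \<notin> S" using Max_ge[OF fin, of "Suc i"] unfolding i_def by auto
  then have "x < t (Suc i)" using \<open>i < n\<close> unfolding S_def by auto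
  then show ?thesis using iS \<open>i < n\<close> unfolding S_def by auto
qed

lemma piece_uniq: "i < n \<Longrightarrow> j < n \<Longrightarrow> t i \<le> x \<Longrightarrow> x < t (Suc i) \<Longrightarrow>
    t j \<le> x \<Longrightarrow> x < t (Suc j) \<Longrightarrow> i = j"
proof (rule ccontr)
  assume a: "i < n" "j < n" "t i \<le> x" "x < t (Suc i)" "t j \<le> x" "x < t (Suc j)" "i \<noteq> j"
  show False
  proof (cases "i < j")
    case True
    then have "t (Suc i) \<le> t j" using t_le[of "Suc i" j] a by auto
    then show False using a by auto
  next
    case False
    then have "t (Suc j) \<le> t i" using t_le[of "Suc j" i] a by auto
    then show False using a by auto
  qed
qed

lemma not_I: "x \<in> X \<Longrightarrow> \<forall>i<n. x \<notin> I i \<Longrightarrow> \<exists>i<n. x = t i"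
  using piece_ex unfolding I_def by fastforce

lemma pre_I: "i < n \<Longrightarrow> y \<in> I i \<Longrightarrow> pre i y \<in> I i"
  unfolding pre_def I_def by auto

lemma pre_pre: "pre i (pre i y) = y"
  unfolding pre_def by auto

lemma h_pre: "i < n \<Longrightarrow> y \<in> I i \<Longrightarrow> h (pre i y) = y + d i"
proof -
  assume i: "i < n" and y: "y \<in> I i"
  have "pre i y \<in> I i" using pre_I[OF i y] .
  then have e: "h (pre i y) = (if fl i then - pre i y + c i else pre i y + c i)"
    using piece[OF i] unfolding I_def by simp
  show ?thesis
  proof (cases "fl i")
    case True then show ?thesis using e unfolding pre_def d_def by simp
  next
    case False then show ?thesis using e unfolding pre_def d_def by simp
  qed
qed

lemma h_bij: "bij_betw h X X" using perm unfolding perm_X_def by (rule conjunct1)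
lemma h_out: "x \<notin> X \<Longrightarrow> h x = x" using perm unfolding perm_X_def by simp
lemma hX: "x \<in> X \<Longrightarrow> h x \<in> X" by (rule bij_betw_apply[OF h_bij])
lemma h_inj: "inj_on h X" using h_bij unfolding bij_betw_def by (rule conjunct1)

lemma d_bounds: "i < n \<Longrightarrow> 0 \<le> t i + d i \<and> t (Suc i) + d i \<le> 1"
proof -
  assume i: "i < n"
  have "\<forall>y. t i < y \<and> y < t (Suc i) \<longrightarrow> y + d i \<in> X"
  proof (intro allI impI)
    fix y assume "t i < y \<and> y < t (Suc i)"
    then have y: "y \<in> I i" unfolding I_def by auto
    then show "y + d i \<in> X" using h_pre[OF i y] hX I_X[OF i pre_I[OF i y]] by metis
  qed
  then have "\<forall>y. t i < y \<and> y < t (Suc i) \<longrightarrow> - d i \<le> y"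
    and "\<forall>y. t i < y \<and> y < t (Suc i) \<longrightarrow> y \<le> 1 - d i"
    unfolding X_def by force+
  then have "- d i \<le> t i" "t (Suc i) \<le> 1 - d i"
    using lower_lim upper_lim tmono i by blast+
  then show ?thesis by auto
qed

lemma h_in_J: "i < n \<Longrightarrow> x \<in> I i \<Longrightarrow> h x \<in> J i"
  using h_pre[of i "pre i x"] pre_I[of i x] unfolding pre_pre J_def I_def by auto

lemma J_pre: "i < n \<Longrightarrow> z \<in> J i \<Longrightarrow> \<exists>w\<in>I i. h w = z"
  using h_pre[of i "z - d i"] pre_I[of i "z - d i"] unfolding J_def I_def
  by (intro bexI[of _ "pre i (z - d i)"]) auto

lemma J_disj: "i < n \<Longrightarrow> j < n \<Longrightarrow> i \<noteq> j \<Longrightarrow> J j \<inter> J i = {}"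
proof (rule ccontr)
  assume a: "i < n" "j < n" "i \<noteq> j" "J j \<inter> J i \<noteq> {}"
  then obtain z where z: "z \<in> J i" "z \<in> J j" by auto
  obtain w1 where w1: "w1 \<in> I i" "h w1 = z" using J_pre[OF a(1) z(1)] by auto
  obtain w2 where w2: "w2 \<in> I j" "h w2 = z" using J_pre[OF a(2) z(2)] by auto
  have "w1 = w2" using h_inj I_X[OF a(1) w1(1)] I_X[OF a(2) w2(1)] w1 w2 inj_on_def by metis
  then show False using I_disj[OF a(1-3)] w1 w2 by auto
qed


definition idx where "idx x = (THE i. i < n \<and> t i \<le> x \<and> x < t (Suc i))"
definition f where "f x = (if x \<in> X then x + d (idx x) else x)"

lemma idx_eq: "i < n \<Longrightarrow> t i \<le> x \<Longrightarrow> x < t (Suc i) \<Longrightarrow> idx x = i"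
  unfolding idx_def by (rule the_equality) (use piece_uniq in blast)+

lemma piece_X: "i < n \<Longrightarrow> t i \<le> x \<Longrightarrow> x < t (Suc i) \<Longrightarrow> x \<in> X"
  using t_bounds[of i] t_bounds[of "Suc i"] unfolding X_def by auto

lemma f_eq: "i < n \<Longrightarrow> t i \<le> x \<Longrightarrow> x < t (Suc i) \<Longrightarrow> f x = x + d i"
  using idx_eq piece_X unfolding f_def by simp

lemma f_out: "x \<notin> X \<Longrightarrow> f x = x" unfolding f_def by simp

lemma f_X: "x \<in> X \<Longrightarrow> f x \<in> X"
proof -
  assume x: "x \<in> X"
  then obtain i where i: "i < n" "t i \<le> x" "x < t (Suc i)" using piece_ex by blast
  have "0 \<le> t i + d i" "t (Suc i) + d i \<le> 1" using d_bounds[OF i(1)] by auto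
  then show ?thesis using f_eq[OF i] i unfolding X_def by auto
qed

lemma f_inj: "inj_on f X"
proof (rule inj_onI)
  fix x z assume x: "x \<in> X" and z: "z \<in> X" and e: "f x = f z"
  obtain i where i: "i < n" "t i \<le> x" "x < t (Suc i)" using piece_ex[OF x] by blast
  obtain j where j: "j < n" "t j \<le> z" "z < t (Suc j)" using piece_ex[OF z] by blast
  show "x = z"
  proof (cases "i = j")
    case True then show ?thesis using e f_eq[OF i] f_eq[OF j] by simp
  next
    case False
    define \<epsilon> where "\<epsilon> = min (t (Suc i) - x) (t (Suc j) - z) / 2"
    have ep: "\<epsilon> > 0" "\<epsilon> < t (Suc i) - x" "\<epsilon> < t (Suc j) - z"
      using i j unfolding \<epsilon>_def by (auto simp: min_def)
    have xi: "x + \<epsilon> \<in> I i" using ep i unfolding I_def by auto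
    have zj: "z + \<epsilon> \<in> I j" using ep j unfolding I_def by auto
    have "h (pre i (x + \<epsilon>)) = h (pre j (z + \<epsilon>))"
      using h_pre[OF i(1) xi] h_pre[OF j(1) zj] e f_eq[OF i] f_eq[OF j] by simp
    then have "pre i (x + \<epsilon>) = pre j (z + \<epsilon>)"
      using h_inj I_X[OF i(1) pre_I[OF i(1) xi]] I_X[OF j(1) pre_I[OF j(1) zj]]
      unfolding inj_on_def by blast
    then show ?thesis using I_disj[OF i(1) j(1) False] pre_I[OF i(1) xi] pre_I[OF j(1) zj] by metis
  qed
qed

lemma ev_neq: "eventually (\<lambda>z. z \<noteq> b) (at_right (y::real))"
proof (cases "b > y")
  case True then show ?thesis unfolding eventually_at_right_field by (intro exI[of _ b]) auto
next
  case False then show ?thesis unfolding eventually_at_right_field by (intro exI[of _ "y+1"]) auto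
qed

lemma f_surj: "y \<in> X \<Longrightarrow> \<exists>x\<in>X. f x = y"
proof -
  assume y: "y \<in> X"
  define B where "B = h ` t ` {..n}"
  have finB: "finite B" unfolding B_def by simp
  have e1: "eventually (\<lambda>z. \<forall>b\<in>B. z \<noteq> b) (at_right y)"
    using finB ev_neq by (simp add: eventually_ball_finite)
  have e2: "eventually (\<lambda>z. y < z \<and> z < 1) (at_right y)"
    using y unfolding X_def eventually_at_right_field by (intro exI[of _ 1]) auto
  have "eventually (\<lambda>z. \<exists>i\<in>{..<n}. z - d i \<in> I i) (at_right y)"
    using e1 e2
  proof eventually_elim
    case (elim z)
    then have zX: "z \<in> X" using y unfolding X_def by auto
    then obtain w where w: "w \<in> X" "h w = z" using h_bij unfolding bij_betw_def by force
    have "\<forall>i<n. w \<noteq> t i" using elim w unfolding B_def by auto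
    then obtain i where i: "i < n" "w \<in> I i" using not_I[OF w(1)] by blast
    have "h w = pre i w + d i" using h_pre[OF i(1) pre_I[OF i]] unfolding pre_pre .
    then have "z - d i = pre i w" using w by simp
    then show ?case using pre_I[OF i] i by (intro bexI[of _ i]) auto
  qed
  then obtain i where i: "i < n" and fr: "frequently (\<lambda>z. z - d i \<in> I i) (at_right y)"
    using eventually_ex_frequently[where P="\<lambda>i z. z - d i \<in> I i" and S="{..<n}" and F="at_right y"] by auto
  have l: "t i \<le> y - d i"
  proof (rule ccontr)
    assume "\<not> t i \<le> y - d i"
    then have "eventually (\<lambda>z. \<not> z - d i \<in> I i) (at_right y)"
      unfolding eventually_at_right_field I_def by (intro exI[of _ "t i + d i"]) auto
    then show False using fr by (simp add: frequently_def)
  qed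
  have u: "y - d i < t (Suc i)"
  proof (rule ccontr)
    assume "\<not> y - d i < t (Suc i)"
    then have "eventually (\<lambda>z. \<not> z - d i \<in> I i) (at_right y)"
      unfolding eventually_at_right_field I_def by (intro exI[of _ "y + 1"]) auto
    then show False using fr by (simp add: frequently_def)
  qed
  show ?thesis using f_eq[OF i l u] piece_X[OF i l u] by (intro bexI[of _ "y - d i"]) auto
qed

lemma f_bij: "bij_betw f X X"
  unfolding bij_betw_def using f_inj f_X f_surj by blast

lemma f_rc: "x \<in> X \<Longrightarrow> continuous (at_right x) f"
proof -
  assume x: "x \<in> X"
  then obtain i where i: "i < n" "t i \<le> x" "x < t (Suc i)" using piece_ex by blast
  have ev: "eventually (\<lambda>z. z + d i = f z) (at_right x)"
    unfolding eventually_at_right_field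
    by (intro exI[of _ "t (Suc i)"]) (use i f_eq in auto)
  have "((\<lambda>z. z + d i) \<longlongrightarrow> x + d i) (at_right x)"
    by (intro tendsto_intros)
  then have "(f \<longlongrightarrow> f x) (at_right x)"
    using tendsto_cong[OF ev] f_eq[OF i] by simp
  then show ?thesis by (simp add: continuous_within)
qed

lemma f_pw: "pw_isom False f"
  unfolding pw_isom_def
proof (intro exI[of _ n] exI[of _ t] conjI t0 tn tmono allI impI)
  fix i assume i: "i < n"
  show "\<exists>c. (\<forall>x. t i < x \<and> x < t (Suc i) \<longrightarrow> f x = x + c) \<or>
       (False \<and> (\<forall>x. t i < x \<and> x < t (Suc i) \<longrightarrow> f x = - x + c))"
    using f_eq[OF i] by (intro exI[of _ "d i"]) auto
qed

lemma f_rc_IET: "IET_hat_plus_rc f"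
  unfolding IET_hat_plus_rc_def IET_hat_plus_def perm_X_def
  using f_bij f_out f_pw f_rc by blast


definition L where "L = filter fl [0..<n]"
definition r0 where "r0 = FP L (\<lambda>i. t i + d i) (\<lambda>i. t (Suc i) + d i)"
definition s0 where "s0 = FP L t (\<lambda>i. t (Suc i))"

lemma L_set: "set L = {i. i < n \<and> fl i}" unfolding L_def by auto
lemma L_distinct: "distinct L" unfolding L_def by simp

lemma I_disj_set: "i < n \<Longrightarrow> j < n \<Longrightarrow> i \<noteq> j \<Longrightarrow> I j \<inter> I i = {}"
  using I_disj by blast

lemma r0_fp: "flip_product r0"
  unfolding r0_def using d_bounds tmono L_set by (intro FP_flip_product) auto

lemma s0_fp: "flip_product s0"
  unfolding s0_def using t_bounds tmono L_set by (intro FP_flip_product) auto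

lemma r0_h: "i < n \<Longrightarrow> x \<in> I i \<Longrightarrow> r0 (h x) = x + d i"
proof -
  assume i: "i < n" and x: "x \<in> I i"
  have hJ: "h x \<in> J i" using h_in_J[OF i x] .
  have e: "h x = (if fl i then - x + c i else x + c i)" using piece[OF i] x unfolding I_def by auto
  show ?thesis
  proof (cases "fl i")
    case True
    have "r0 (h x) = (t i + d i) + (t (Suc i) + d i) - h x"
      unfolding r0_def
      by (rule FP_flip) (use L_distinct L_set i True hJ J_disj in \<open>auto simp: J_def\<close>)
    then show ?thesis using e True unfolding d_def by simp
  next
    case False
    have "r0 (h x) = h x"
      unfolding r0_def
    proof (rule FP_fix, intro ballI notI)
      fix j assume j: "j \<in> set L" "h x \<in> {t j + d j<..<t (Suc j) + d j}"
      then have jn: "j < n" "i \<noteq> j" using L_set False by auto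
      then show False using J_disj[OF i jn(1) jn(2)] hJ j(2) unfolding J_def by blast
    qed
    then show ?thesis using e False unfolding d_def by simp
  qed
qed

lemma s0_I: "i < n \<Longrightarrow> x \<in> I i \<Longrightarrow> s0 x = pre i x"
proof -
  assume i: "i < n" and x: "x \<in> I i"
  show ?thesis
  proof (cases "fl i")
    case True
    have "s0 x = t i + t (Suc i) - x"
      unfolding s0_def
      by (rule FP_flip) (use L_distinct L_set i True x I_disj_set in \<open>auto simp: I_def\<close>)
    then show ?thesis using True unfolding pre_def by simp
  next
    case False
    have "s0 x = x"
      unfolding s0_def
    proof (rule FP_fix, intro ballI notI)
      fix j assume j: "j \<in> set L" "x \<in> {t j<..<t (Suc j)}"
      then have jn: "j < n" "i \<noteq> j" using L_set False by auto
      then show False using I_disj[OF i jn(1) jn(2)] x j(2) unfolding I_def by blast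
    qed
    then show ?thesis using False unfolding pre_def by simp
  qed
qed

definition fi where "fi y = (if y \<in> X then inv_into X f y else y)"

lemma fi_f: "fi (f x) = x"
proof (cases "x \<in> X")
  case True
  then show ?thesis using f_X f_inj unfolding fi_def by (simp add: inv_into_f_f)
next
  case False
  then show ?thesis unfolding fi_def using f_out by simp
qed

lemma f_fi: "f (fi y) = y"
proof (cases "y \<in> X")
  case True
  then have "y \<in> f ` X" using f_bij unfolding bij_betw_def by simp
  then show ?thesis using True unfolding fi_def by (simp add: f_inv_into_f)
next
  case False
  then show ?thesis unfolding fi_def using f_out by simp
qed

lemma fi_bij: "bij_betw fi X X"
proof -
  have "bij_betw (inv_into X f) X X" using bij_betw_inv_into[OF f_bij] .
  then show ?thesis by (rule bij_betw_cong[THEN iffD1, rotated]) (simp add: fi_def)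
qed

lemma fi_out: "y \<notin> X \<Longrightarrow> fi y = y" unfolding fi_def by simp

lemma r0_out: "y \<notin> X \<Longrightarrow> r0 y = y"
  using flip_product_perm[OF r0_fp] by blast
lemma s0_out: "y \<notin> X \<Longrightarrow> s0 y = y"
  using flip_product_perm[OF s0_fp] by blast
lemma r0_bij: "bij_betw r0 X X"
  using flip_product_perm[OF r0_fp] by blast
lemma s0_bij: "bij_betw s0 X X"
  using flip_product_perm[OF s0_fp] by blast

lemma sigma_fs: "fin_supp_perm_X (r0 \<circ> h \<circ> fi)"
proof -
  have b0: "bij_betw (r0 \<circ> (h \<circ> fi)) X X"
    by (rule bij_betw_trans[OF bij_betw_trans[OF fi_bij h_bij] r0_bij])
  have b: "bij_betw (r0 \<circ> h \<circ> fi) X X" using b0 by (simp only: comp_assoc)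
  have out: "(r0 \<circ> h \<circ> fi) y = y" if "y \<notin> X" for y
  proof -
    have "fi y = y" using fi_out[OF that] .
    moreover have "h y = y" using h_out[OF that] .
    moreover have "r0 y = y" using r0_out[OF that] .
    ultimately show ?thesis by (simp only: comp_apply)
  qed
  have sub: "{y. (r0 \<circ> h \<circ> fi) y \<noteq> y} \<subseteq> f ` t ` {..<n}"
  proof
    fix y assume a: "y \<in> {y. (r0 \<circ> h \<circ> fi) y \<noteq> y}"
    then have a': "r0 (h (fi y)) \<noteq> y" by simp
    have yX: "y \<in> X" using out a' by (metis comp_apply)
    obtain x where x: "x = fi y" by blast
    have fx: "f x = y" unfolding x by (rule f_fi)
    have xX: "x \<in> X" unfolding x by (rule bij_betw_apply[OF fi_bij yX])
    have "\<not> (\<exists>i<n. x \<in> I i)"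
    proof
      assume "\<exists>i<n. x \<in> I i"
      then obtain i where i: "i < n" "x \<in> I i" by blast
      have "t i \<le> x" "x < t (Suc i)" using i(2) unfolding I_def by auto
      then have "r0 (h x) = f x" using r0_h[OF i] f_eq[OF i(1)] by metis
      then show False using a' fx x by simp
    qed
    then obtain i where "i < n" "x = t i" using not_I[OF xX] by blast
    then show "y \<in> f ` t ` {..<n}" using fx by blast
  qed
  have "finite {y. (r0 \<circ> h \<circ> fi) y \<noteq> y}" using finite_subset[OF sub] by simp
  moreover have "{y. (r0 \<circ> h \<circ> fi) y \<noteq> y} \<subseteq> X" using out by blast
  ultimately show ?thesis using b unfolding fin_supp_perm_X_def by blast
qed

lemma tau_fs: "fin_supp_perm_X (fi \<circ> h \<circ> s0)"
proof -
  have b0: "bij_betw (fi \<circ> (h \<circ> s0)) X X"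
    by (rule bij_betw_trans[OF bij_betw_trans[OF s0_bij h_bij] fi_bij])
  have b: "bij_betw (fi \<circ> h \<circ> s0) X X" using b0 by (simp only: comp_assoc)
  have out: "(fi \<circ> h \<circ> s0) y = y" if "y \<notin> X" for y
  proof -
    have "fi y = y" using fi_out[OF that] .
    moreover have "h y = y" using h_out[OF that] .
    moreover have "s0 y = y" using s0_out[OF that] .
    ultimately show ?thesis by (simp only: comp_apply)
  qed
  have sub: "{y. (fi \<circ> h \<circ> s0) y \<noteq> y} \<subseteq> t ` {..<n}"
  proof
    fix x assume a: "x \<in> {y. (fi \<circ> h \<circ> s0) y \<noteq> y}"
    then have a': "fi (h (s0 x)) \<noteq> x" by simp
    have xX: "x \<in> X" using out a' by (metis comp_apply)
    have "\<not> (\<exists>i<n. x \<in> I i)"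
    proof
      assume "\<exists>i<n. x \<in> I i"
      then obtain i where i: "i < n" "x \<in> I i" by blast
      have "t i \<le> x" "x < t (Suc i)" using i(2) unfolding I_def by auto
      then have "h (s0 x) = f x"
        using s0_I[OF i] h_pre[OF i] f_eq[OF i(1)] by metis
      then have "fi (h (s0 x)) = x" using fi_f by simp
      then show False using a' by simp
    qed
    then obtain i where "i < n" "x = t i" using not_I[OF xX] by blast
    then show "x \<in> t ` {..<n}" by blast
  qed
  have "finite {y. (fi \<circ> h \<circ> s0) y \<noteq> y}" using finite_subset[OF sub] by simp
  moreover have "{y. (fi \<circ> h \<circ> s0) y \<noteq> y} \<subseteq> X" using out by blast
  ultimately show ?thesis using b unfolding fin_supp_perm_X_def by blast
qed

lemma main:
  "\<exists>f g r s \<sigma> \<tau>. IET_hat_plus_rc f \<and> IET_hat_plus_rc g \<and>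
           flip_product r \<and> flip_product s \<and> fin_supp_perm_X \<sigma> \<and> fin_supp_perm_X \<tau> \<and>
           h = r \<circ> \<sigma> \<circ> f \<and> h = g \<circ> \<tau> \<circ> s"
proof -
  obtain r where r: "flip_product r" "r \<circ> r0 = id" using flip_product_inverse[OF r0_fp] by blast
  obtain s where s: "flip_product s" "s0 \<circ> s = id" using flip_product_inverse[OF s0_fp] by blast
  have e1: "h = r \<circ> (r0 \<circ> h \<circ> fi) \<circ> f"
  proof
    fix x
    have "r (r0 z) = z" for z using fun_cong[OF r(2), of z] by simp
    then show "h x = (r \<circ> (r0 \<circ> h \<circ> fi) \<circ> f) x" using fi_f by simp
  qed
  have e2: "h = f \<circ> (fi \<circ> h \<circ> s0) \<circ> s"
  proof
    fix x
    have "s0 (s z) = z" for z using fun_cong[OF s(2), of z] by simp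
    then show "h x = (f \<circ> (fi \<circ> h \<circ> s0) \<circ> s) x" using f_fi by simp
  qed
  show ?thesis using f_rc_IET r(1) s(1) sigma_fs tau_fs e1 e2 by blast
qed

end

theorem proposition2p4:
  assumes "IET_hat_flip h"
  shows "\<exists>f g r s \<sigma> \<tau>. IET_hat_plus_rc f \<and> IET_hat_plus_rc g \<and>
           flip_product r \<and> flip_product s \<and> fin_supp_perm_X \<sigma> \<and> fin_supp_perm_X \<tau> \<and>
           h = r \<circ> \<sigma> \<circ> f \<and> h = g \<circ> \<tau> \<circ> s"
proof -
  have p: "perm_X h" and pw: "pw_isom True h" using assms unfolding IET_hat_flip_def by auto
  obtain n t where t: "t 0 = 0" "t n = 1" "\<forall>i<n. t i < t (Suc i)"
    and pc: "\<forall>i<n. \<exists>c. (\<forall>x. t i < x \<and> x < t (Suc i) \<longrightarrow> h x = x + c) \<or>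
                   (True \<and> (\<forall>x. t i < x \<and> x < t (Suc i) \<longrightarrow> h x = - x + c))"
    using pw unfolding pw_isom_def by blast
  obtain c where c: "\<forall>i<n. (\<forall>x. t i < x \<and> x < t (Suc i) \<longrightarrow> h x = x + c i) \<or>
                   (\<forall>x. t i < x \<and> x < t (Suc i) \<longrightarrow> h x = - x + c i)"
    using pc by metis
  define fl where "fl i = (\<not> (\<forall>x. t i < x \<and> x < t (Suc i) \<longrightarrow> h x = x + c i))" for i
  interpret dec h n t c fl
  proof
    fix i x assume "i < n" "t i < x" "x < t (Suc i)"
    then show "h x = (if fl i then - x + c i else x + c i)"
      using c unfolding fl_def by auto
  qed (use p t in auto)
  show ?thesis by (rule main)
qed

end
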